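(* Let $(\mathcal Y,\mu)$ be a measure space and $p,q\ge0$ $\mu$-integrable functions on $\mathcal Y$. Then $$\sup_{\phi,\psi}\Big\{\int_{\mathcal Y}(p\phi-q\psi)\,d\mu:\ 0\le\phi\le\psi\le2,\ \sup\phi\le1+\inf\psi\Big\}=\int(p-q)_+\,d\mu+\Big(\int(p-q)\,d\mu\Big)_+,$$ where the supremum is over measurable $\phi,\psi:\mathcal Y\to\mathbb R$ and $(x)_+=\max\{x,0\}$. *)

theory Defs
  imports "HOL-Analysis.Analysis"
begin

end

theory Submission
  imports Defs
begin

lemma int_mult_bdd:
  fixes p :: "'a \<Rightarrow> real"
  assumes "integrable M p" "\<phi> \<in> borel_measurable M" "\<forall>x\<in>space M. \<bar>\<phi> x\<bar> \<le> 2"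
  shows "integrable M (\<lambda>x. p x * \<phi> x)"
proof (rule Bochner_Integration.integrable_bound[where f="\<lambda>x. 2 * p x"])
  show "integrable M (\<lambda>x. 2 * p x)" using assms(1) by simp
  show "(\<lambda>x. p x * \<phi> x) \<in> borel_measurable M"
    using assms(1,2) by (simp add: borel_measurable_integrable)
  show "AE x in M. norm (p x * \<phi> x) \<le> norm (2 * p x)"
  proof (intro AE_I2 impI)
    fix x assume "x \<in> space M"
    then have "\<bar>\<phi> x\<bar> * \<bar>p x\<bar> \<le> 2 * \<bar>p x\<bar>" using assms(3)
      by (intro mult_right_mono) auto
    then show "norm (p x * \<phi> x) \<le> norm (2 * p x)" by (simp add: abs_mult mult.commute)
  qed
qed

lemma pointwise:
  fixes p q f g c :: real
  assumes "p \<ge> 0" "q \<ge> 0" "0 \<le> f" "f \<le> g" "f \<le> 1 + c" "c \<le> g" "0 \<le> c" "c \<le> 1"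
  shows "p * f - q * g \<le> max (p - q) 0 + c * (p - q)"
proof -
  have "q * max f c \<le> q * g" using assms by (intro mult_left_mono) auto
  moreover have "p * f - q * max f c \<le> max (p - q) 0 + c * (p - q)"
  proof (cases "f \<le> c")
    case True
    then have "p * f \<le> p * c" using assms by (intro mult_left_mono) auto
    then show ?thesis using True by (auto simp: max_def algebra_simps)
  next
    case False
    have "(p - q) * (f - c) \<le> max (p - q) 0"
    proof (cases "p - q \<ge> 0")
      case True
      then have "(p - q) * (f - c) \<le> (p - q) * 1" using assms False
        by (intro mult_left_mono) auto
      then show ?thesis using True by simp
    next
      case F: False
      then have "(p - q) * (f - c) \<le> 0" using False
        by (simp add: mult_nonpos_nonneg)
      then show ?thesis by simp
    qed
    then show ?thesis using False by (auto simp: max_def algebra_simps)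
  qed
  ultimately show ?thesis by linarith
qed

theorem lemma2:
  fixes M :: "'a measure" and p q :: "'a \<Rightarrow> real"
  assumes "integrable M p" and "integrable M q"
    and "\<forall>x\<in>space M. p x \<ge> 0" and "\<forall>x\<in>space M. q x \<ge> 0"
  shows "Sup {(LINT x|M. p x * \<phi> x - q x * \<psi> x) | \<phi> \<psi>.
            \<phi> \<in> borel_measurable M \<and> \<psi> \<in> borel_measurable M \<and>
            (\<forall>x\<in>space M. 0 \<le> \<phi> x \<and> \<phi> x \<le> \<psi> x \<and> \<psi> x \<le> 2) \<and>
            (\<forall>x\<in>space M. \<forall>y\<in>space M. \<phi> x \<le> 1 + \<psi> y)}
         = (LINT x|M. max (p x - q x) 0) + max (LINT x|M. p x - q x) 0"
    (is "Sup ?S = ?R")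
proof (rule cSup_eq_maximum)
  have ipq: "integrable M (\<lambda>x. p x - q x)" using assms by auto
  have imax: "integrable M (\<lambda>x. max (p x - q x) 0)" using ipq by auto
  have mp: "p \<in> borel_measurable M" "q \<in> borel_measurable M"
    using assms by (auto simp: borel_measurable_integrable)
  have predA: "Measurable.pred M (\<lambda>x. q x < p x)" using mp by measurable
  show "?R \<in> ?S"
  proof (cases "(LINT x|M. p x - q x) \<ge> 0")
    case True
    define f where "f = (\<lambda>x. if q x < p x then 2 else 1::real)"
    have fm: "f \<in> borel_measurable M" unfolding f_def using predA by measurable
    have eq: "\<And>x. p x * f x - q x * f x = max (p x - q x) 0 + (p x - q x)"
      by (auto simp: f_def max_def algebra_simps)
    have "(LINT x|M. p x * f x - q x * f x) = ?R"
      unfolding eq using True imax ipq by (simp add: Bochner_Integration.integral_add)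
    moreover have "\<forall>x\<in>space M. 0 \<le> f x \<and> f x \<le> f x \<and> f x \<le> 2"
      "\<forall>x\<in>space M. \<forall>y\<in>space M. f x \<le> 1 + f y" by (auto simp: f_def)
    ultimately show ?thesis using fm
      unfolding mem_Collect_eq by (intro exI[of _ f]) simp
  next
    case False
    define f where "f = (\<lambda>x. if q x < p x then 1 else 0::real)"
    have fm: "f \<in> borel_measurable M" unfolding f_def using predA by measurable
    have eq: "\<And>x. p x * f x - q x * f x = max (p x - q x) 0"
      by (auto simp: f_def max_def algebra_simps)
    have "(LINT x|M. p x * f x - q x * f x) = ?R"
      unfolding eq using False by simp
    moreover have "\<forall>x\<in>space M. 0 \<le> f x \<and> f x \<le> f x \<and> f x \<le> 2"
      "\<forall>x\<in>space M. \<forall>y\<in>space M. f x \<le> 1 + f y" by (auto simp: f_def)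
    ultimately show ?thesis using fm
      unfolding mem_Collect_eq by (intro exI[of _ f]) simp
  qed
  fix s assume "s \<in> ?S"
  then obtain \<phi> \<psi> where s: "s = (LINT x|M. p x * \<phi> x - q x * \<psi> x)"
    and m: "\<phi> \<in> borel_measurable M" "\<psi> \<in> borel_measurable M"
    and b: "\<forall>x\<in>space M. 0 \<le> \<phi> x \<and> \<phi> x \<le> \<psi> x \<and> \<psi> x \<le> 2"
    and c: "\<forall>x\<in>space M. \<forall>y\<in>space M. \<phi> x \<le> 1 + \<psi> y" by blast
  obtain c' where c': "0 \<le> c'" "c' \<le> 1" "\<forall>x\<in>space M. \<phi> x \<le> 1 + c' \<and> c' \<le> \<psi> x"
  proof (cases "space M = {}")
    case True then show ?thesis using that[of 0] by auto
  next
    case False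
    define c where "c = Inf (\<psi> ` space M)"
    have bdd: "bdd_below (\<psi> ` space M)" using b
      by (intro bdd_belowI[of _ 0]) force
    have c1: "\<forall>x\<in>space M. c \<le> \<psi> x" unfolding c_def using bdd
      by (auto intro: cInf_lower)
    have c2: "\<forall>x\<in>space M. \<phi> x \<le> 1 + c"
    proof
      fix x assume x: "x \<in> space M"
      have "\<phi> x - 1 \<le> c" unfolding c_def using False c x
        by (intro cInf_greatest) force+
      then show "\<phi> x \<le> 1 + c" by simp
    qed
    have "0 \<le> c" unfolding c_def using False b
      by (intro cInf_greatest) force+
    then show ?thesis using c1 c2 b that[of "min c 1"] by force
  qed
  have i1: "integrable M (\<lambda>x. p x * \<phi> x - q x * \<psi> x)"
    using int_mult_bdd[OF assms(1) m(1)] int_mult_bdd[OF assms(2) m(2)] b by force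
  have i2: "integrable M (\<lambda>x. max (p x - q x) 0 + c' * (p x - q x))"
    using imax ipq by auto
  have "s \<le> (LINT x|M. max (p x - q x) 0 + c' * (p x - q x))"
    unfolding s using i1 i2
  proof (intro integral_mono)
    fix x assume "x \<in> space M"
    then show "p x * \<phi> x - q x * \<psi> x \<le> max (p x - q x) 0 + c' * (p x - q x)"
      using pointwise[of "p x" "q x" "\<phi> x" "\<psi> x" c'] assms b c' by auto
  qed
  also have "\<dots> = (LINT x|M. max (p x - q x) 0) + c' * (LINT x|M. p x - q x)"
    using imax ipq by (simp add: Bochner_Integration.integral_add)
  also have "\<dots> \<le> ?R"
  proof -
    have "c' * (LINT x|M. p x - q x) \<le> max (LINT x|M. p x - q x) 0"
    proof (cases "(LINT x|M. p x - q x) \<ge> 0")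
      case True
      then have "c' * (LINT x|M. p x - q x) \<le> 1 * (LINT x|M. p x - q x)"
        using c' by (intro mult_right_mono) auto
      then show ?thesis by simp
    next
      case False
      then show ?thesis using c' by (simp add: mult_nonneg_nonpos)
    qed
    then show ?thesis by simp
  qed
  finally show "s \<le> ?R" .
qed

end
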